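(* Let $\varepsilon>0$, and consider a colouring of the edges of the complete bipartite graph $K_{n,n}$ with parts $X,Y$ (each of size $n$) in red and blue such that every vertex of $X$ is incident to at least $\varepsilon n$ red edges and every vertex of $Y$ is incident to at least $\varepsilon n$ blue edges. Then this colouring contains at least $\varepsilon^4n^4/150$ distinct copies of $M_1$.
   Context: $M_1$ is the properly $2$-edge-coloured $K_{2,2}$, i.e. a $4$-cycle whose edges are alternately red and blue. *)

theory Defs
  imports Complex_Main
begin

text \<open>A red/blue colouring of the edges of the complete bipartite graph with
parts X :: 'a set and Y :: 'b set is a predicate red :: 'a => 'b => bool
(edge xy is red iff red x y, blue otherwise).  A copy of M_1 (properly
2-edge-coloured K_{2,2}) is determined by its vertex sets A (two vertices of X)
and B (two vertices of Y): the four edges between them form a 4-cycle whose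
colours alternate.\<close>

definition M1_copies :: "'a set \<Rightarrow> 'b set \<Rightarrow> ('a \<Rightarrow> 'b \<Rightarrow> bool) \<Rightarrow> ('a set \<times> 'b set) set" where
  "M1_copies X Y red = {(A, B). A \<subseteq> X \<and> B \<subseteq> Y \<and>
     (\<exists>x1 x2 y1 y2. A = {x1, x2} \<and> B = {y1, y2} \<and> x1 \<noteq> x2 \<and> y1 \<noteq> y2 \<and>
        red x1 y1 \<and> red x2 y2 \<and> \<not> red x1 y2 \<and> \<not> red x2 y1)}"

end

theory Submission
  imports Defs
begin

lemma pair_ineq:
  fixes a12 a21 d1 d2 t :: real
  assumes "a12 \<ge> 0" "a21 \<ge> 0" "a12 + d2 = a21 + d1" "d1 \<ge> 0" "d2 \<ge> 0"
  shows "a12 * a21 \<ge> max 0 (t - d1) * a12 + max 0 (t - d2) * a21 - max 0 (t - d1) * max 0 (t - d2)"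
proof (cases "d1 < t")
  case True
  show ?thesis
  proof (cases "d2 < t")
    case True
    have "a12 * a21 - ((t - d1) * a12 + (t - d2) * a21 - (t - d1) * (t - d2)) = (a12 - (t - d2)) * (a21 - (t - d1))"
      by (simp add: algebra_simps)
    also have "\<dots> = (a12 + d2 - t) * (a12 + d2 - t)" using assms(3) by (simp add: algebra_simps)
    also have "\<dots> \<ge> 0" by simp
    finally show ?thesis using \<open>d1 < t\<close> True by simp
  next
    case False
    have "a21 \<ge> t - d1" using assms False by linarith
    hence "a12 * a21 \<ge> a12 * (t - d1)" using assms(1) by (simp add: mult_left_mono)
    thus ?thesis using \<open>d1 < t\<close> False by (simp add: mult.commute)
  qed
next
  case False
  show ?thesis
  proof (cases "d2 < t")
    case True
    have "a12 \<ge> t - d2" using assms False by linarith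
    hence "a12 * a21 \<ge> (t - d2) * a21" using assms(2) by (simp add: mult_right_mono)
    thus ?thesis using \<open>\<not> d1 < t\<close> True by simp
  next
    case False
    thus ?thesis using \<open>\<not> d1 < t\<close> assms by simp
  qed
qed

lemma card_filter_sum:
  assumes "finite Y"
  shows "real (card {y\<in>Y. P y}) = (\<Sum>y\<in>Y. if P y then 1 else 0)"
  using assms by (simp add: sum.If_cases Int_def)

lemma card2: "card {a, b} \<le> 2"
  by (cases "a = b") auto

lemma fiber_le2:
  fixes red :: "'a \<Rightarrow> 'b \<Rightarrow> bool"
  assumes "finite S"
  shows "card {q \<in> S. (\<lambda>(x1, x2, y1, y2). ({x1, x2}, {y1, y2})) q = c
      \<and> (\<lambda>(x1, x2, y1, y2). red x1 y1 \<and> red x2 y2 \<and> \<not> red x1 y2 \<and> \<not> red x2 y1) q} \<le> 2"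
proof -
  let ?F = "{q \<in> S. (\<lambda>(x1, x2, y1, y2). ({x1, x2}, {y1, y2})) q = c
      \<and> (\<lambda>(x1, x2, y1, y2). red x1 y1 \<and> red x2 y2 \<and> \<not> red x1 y2 \<and> \<not> red x2 y1) q}"
  show ?thesis
  proof (cases "?F = {}")
    case True
    have "card ?F = 0" unfolding True by (rule card.empty)
    thus ?thesis by linarith
  next
    case False
    then obtain x1 x2 y1 y2 where e: "(x1, x2, y1, y2) \<in> ?F" by auto
    have "?F \<subseteq> {(x1, x2, y1, y2), (x2, x1, y2, y1)}"
    proof
      fix q assume q: "q \<in> ?F"
      obtain p1 p2 q1 q2 where qd: "q = (p1, p2, q1, q2)" by (cases q) auto
      from e q qd have h: "{p1, p2} = {x1, x2}" "{q1, q2} = {y1, y2}"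
        "red x1 y1" "red x2 y2" "\<not> red x1 y2" "\<not> red x2 y1"
        "red p1 q1" "red p2 q2" "\<not> red p1 q2" "\<not> red p2 q1" by auto
      have x: "(p1 = x1 \<and> p2 = x2) \<or> (p1 = x2 \<and> p2 = x1)" using h(1) by (simp add: doubleton_eq_iff)
      have y: "(q1 = y1 \<and> q2 = y2) \<or> (q1 = y2 \<and> q2 = y1)" using h(2) by (simp add: doubleton_eq_iff)
      show "q \<in> {(x1, x2, y1, y2), (x2, x1, y2, y1)}"
        using x y h(3-10) unfolding qd by blast
    qed
    hence "card ?F \<le> card {(x1, x2, y1, y2), (x2, x1, y2, y1)}"
      by (intro card_mono) auto
    also have "\<dots> \<le> 2" by (rule card2)
    finally show ?thesis .
  qed
qed


theorem lemma3p6: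
  fixes X :: "'a set" and Y :: "'b set" and red :: "'a \<Rightarrow> 'b \<Rightarrow> bool"
    and n :: nat and \<epsilon> :: real
  assumes "\<epsilon> > 0"
    and "finite X" and "finite Y" and "card X = n" and "card Y = n"
    and "\<forall>x\<in>X. real (card {y\<in>Y. red x y}) \<ge> \<epsilon> * real n"
    and "\<forall>y\<in>Y. real (card {x\<in>X. \<not> red x y}) \<ge> \<epsilon> * real n"
  shows "real (card (M1_copies X Y red)) \<ge> \<epsilon> ^ 4 * real n ^ 4 / 150"
proof (cases "n = 0")
  case True thus ?thesis by simp
next
  case False
  define k where "k = \<epsilon> * real n"
  have k0: "k \<ge> 0" unfolding k_def using assms(1) by simp
  define A where "A x1 x2 = {y\<in>Y. red x1 y \<and> \<not> red x2 y}" for x1 x2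
  define a where "a x1 x2 = real (card (A x1 x2))" for x1 x2
  define d where "d x = real (card {y\<in>Y. red x y})" for x
  define Quad where "Quad = (SIGMA x1:X. SIGMA x2:X. A x1 x2 \<times> A x2 x1)"
  define Qs where "Qs = (\<Sum>x1\<in>X. \<Sum>x2\<in>X. a x1 x2 * a x2 x1)"
  define M where "M = M1_copies X Y red"
  have finA: "finite (A x1 x2)" for x1 x2 by (simp add: A_def assms(3))
  have finQ: "finite Quad" unfolding Quad_def using assms(2) finA by (intro finite_SigmaI) auto
  have "card Quad = (\<Sum>x1\<in>X. \<Sum>x2\<in>X. card (A x1 x2) * card (A x2 x1))"
    unfolding Quad_def using assms(2) finA
    by (simp add: card_cartesian_product finite_SigmaI)
  hence QsEq: "real (card Quad) = Qs" unfolding Qs_def a_def by simp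
  \<comment> \<open>each copy has at most two labelled preimages\<close>
  define f where "f = (\<lambda>(x1::'a, x2::'a, y1::'b, y2::'b). ({x1, x2}, {y1, y2}))"
  define P where "P = (\<lambda>(x1::'a, x2::'a, y1::'b, y2::'b). red x1 y1 \<and> red x2 y2 \<and> \<not> red x1 y2 \<and> \<not> red x2 y1)"
  have finM: "finite M"
  proof -
    have "M \<subseteq> Pow X \<times> Pow Y" unfolding M_def M1_copies_def by auto
    thus ?thesis using assms(2,3) by (meson finite_Pow_iff finite_SigmaI finite_subset)
  qed
  have QinM: "f q \<in> M \<and> P q" if "q \<in> Quad" for q
  proof -
    obtain x1 x2 y1 y2 where qd: "q = (x1, x2, y1, y2)" by (cases q) auto
    from that have h: "x1 \<in> X" "x2 \<in> X" "y1 \<in> Y" "y2 \<in> Y" "red x1 y1" "\<not> red x2 y1"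
      "red x2 y2" "\<not> red x1 y2" unfolding qd Quad_def A_def by auto
    have "x1 \<noteq> x2" "y1 \<noteq> y2" using h by auto
    thus ?thesis using h unfolding qd f_def P_def M_def M1_copies_def by auto
  qed
  have sub: "Quad \<subseteq> (\<Union>c\<in>M. {q \<in> Quad. f q = c \<and> P q})" using QinM by blast
  have finU: "finite (\<Union>c\<in>M. {q \<in> Quad. f q = c \<and> P q})" by (rule finite_subset[OF _ finQ]) auto
  have "card Quad \<le> card (\<Union>c\<in>M. {q \<in> Quad. f q = c \<and> P q})"
    by (rule card_mono[OF finU sub])
  also have "\<dots> \<le> (\<Sum>c\<in>M. card {q \<in> Quad. f q = c \<and> P q})" by (rule card_UN_le[OF finM])
  also have "\<dots> \<le> (\<Sum>c\<in>M. 2)"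
    by (intro sum_mono) (unfold f_def P_def, rule fiber_le2[OF finQ])
  finally have QM: "card Quad \<le> 2 * card M" by simp
  have w: "a x1 x2 + d x2 = a x2 x1 + d x1" for x1 x2
  proof -
    have e1: "card (A x1 x2) + card {y\<in>Y. red x2 y} = card {y\<in>Y. red x1 y \<or> red x2 y}"
    proof -
      have "card (A x1 x2 \<union> {y\<in>Y. red x2 y}) = card (A x1 x2) + card {y\<in>Y. red x2 y}"
        by (rule card_Un_disjoint) (auto simp: A_def assms(3))
      moreover have "A x1 x2 \<union> {y\<in>Y. red x2 y} = {y\<in>Y. red x1 y \<or> red x2 y}" by (auto simp: A_def)
      ultimately show ?thesis by simp
    qed
    have e2: "card (A x2 x1) + card {y\<in>Y. red x1 y} = card {y\<in>Y. red x1 y \<or> red x2 y}"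
    proof -
      have "card (A x2 x1 \<union> {y\<in>Y. red x1 y}) = card (A x2 x1) + card {y\<in>Y. red x1 y}"
        by (rule card_Un_disjoint) (auto simp: A_def assms(3))
      moreover have "A x2 x1 \<union> {y\<in>Y. red x1 y} = {y\<in>Y. red x1 y \<or> red x2 y}" by (auto simp: A_def)
      ultimately show ?thesis by simp
    qed
    show ?thesis unfolding a_def d_def using e1 e2 by (metis of_nat_add)
  qed
  have dge: "d x \<ge> k" if "x \<in> X" for x using assms(6) that unfolding d_def k_def by blast
  have a0: "a x1 x2 \<ge> 0" for x1 x2 unfolding a_def by simp
  have d0: "d x \<ge> 0" for x unfolding d_def by simp
  have mass: "(\<Sum>x2\<in>X. a x1 x2) \<ge> k * d x1" if "x1 \<in> X" for x1
  proof -
    have "(\<Sum>x2\<in>X. a x1 x2) = (\<Sum>x2\<in>X. \<Sum>y\<in>Y. if red x1 y \<and> \<not> red x2 y then 1 else 0)"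
      unfolding a_def A_def by (intro sum.cong refl card_filter_sum[OF assms(3)])
    also have "\<dots> = (\<Sum>y\<in>Y. \<Sum>x2\<in>X. if red x1 y \<and> \<not> red x2 y then 1 else 0)"
      by (rule sum.swap)
    also have "\<dots> = (\<Sum>y\<in>Y. if red x1 y then (\<Sum>x2\<in>X. if \<not> red x2 y then 1 else 0) else 0)"
      by (intro sum.cong refl) auto
    also have "\<dots> = (\<Sum>y\<in>Y. if red x1 y then real (card {x2\<in>X. \<not> red x2 y}) else 0)"
      by (intro sum.cong refl) (simp add: card_filter_sum[OF assms(2)])
    also have "\<dots> \<ge> (\<Sum>y\<in>Y. if red x1 y then k else 0)"
      by (intro sum_mono) (use assms(7) in \<open>auto simp: k_def\<close>)
    also have "(\<Sum>y\<in>Y. if red x1 y then k else 0) = k * d x1"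
    proof -
      have "(\<Sum>y\<in>Y. if red x1 y then k else 0) = (\<Sum>y\<in>Y. k * (if red x1 y then 1 else 0))"
        by (intro sum.cong refl) auto
      also have "\<dots> = k * d x1" unfolding d_def
        by (simp add: sum_distrib_left[symmetric] card_filter_sum[OF assms(3)])
      finally show ?thesis .
    qed
    finally show ?thesis .
  qed
  define U where "U t = (\<Sum>x\<in>X. max 0 (t - d x))" for t
  have U0: "U t \<ge> 0" for t unfolding U_def by (intro sum_nonneg) auto
  have key: "Qs \<ge> 2 * k^2 * U t - (U t)^2" for t
  proof -
    let ?u = "\<lambda>x. max 0 (t - d x)"
    have "Qs \<ge> (\<Sum>x1\<in>X. \<Sum>x2\<in>X. ?u x1 * a x1 x2 + ?u x2 * a x2 x1 - ?u x1 * ?u x2)"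
      unfolding Qs_def
      by (intro sum_mono pair_ineq a0 d0 w)
    also have "(\<Sum>x1\<in>X. \<Sum>x2\<in>X. ?u x1 * a x1 x2 + ?u x2 * a x2 x1 - ?u x1 * ?u x2)
        = (\<Sum>x1\<in>X. ?u x1 * (\<Sum>x2\<in>X. a x1 x2)) + (\<Sum>x1\<in>X. \<Sum>x2\<in>X. ?u x2 * a x2 x1)
          - (\<Sum>x1\<in>X. \<Sum>x2\<in>X. ?u x1 * ?u x2)"
      by (simp add: sum.distrib sum_subtractf sum_distrib_left)
    also have "(\<Sum>x1\<in>X. \<Sum>x2\<in>X. ?u x2 * a x2 x1) = (\<Sum>x2\<in>X. ?u x2 * (\<Sum>x1\<in>X. a x2 x1))"
      by (subst sum.swap) (simp add: sum_distrib_left)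
    also have "(\<Sum>x1\<in>X. \<Sum>x2\<in>X. ?u x1 * ?u x2) = (U t)^2"
      unfolding U_def power2_eq_square by (simp add: sum_product)
    finally have 1: "Qs \<ge> 2 * (\<Sum>x\<in>X. ?u x * (\<Sum>x2\<in>X. a x x2)) - (U t)^2" by simp
    have "(\<Sum>x\<in>X. ?u x * (\<Sum>x2\<in>X. a x x2)) \<ge> (\<Sum>x\<in>X. ?u x * (k * k))"
    proof (intro sum_mono)
      fix x assume x: "x \<in> X"
      have "k * k \<le> k * d x" using dge[OF x] k0 by (simp add: mult_left_mono)
      also have "\<dots> \<le> (\<Sum>x2\<in>X. a x x2)" using mass[OF x] .
      finally show "?u x * (k * k) \<le> ?u x * (\<Sum>x2\<in>X. a x x2)" by (intro mult_left_mono) auto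
    qed
    also have "(\<Sum>x\<in>X. ?u x * (k * k)) = k^2 * U t"
      unfolding U_def power2_eq_square by (simp add: sum_distrib_left mult.commute)
    finally show ?thesis using 1 by linarith
  qed
  obtain x0 where x0: "x0 \<in> X" using False assms(4) by fastforce
  have dle: "d x \<le> real n" if "x \<in> X" for x
  proof -
    have "card {y\<in>Y. red x y} \<le> card Y" by (intro card_mono assms(3)) auto
    thus ?thesis unfolding d_def using assms(5) by simp
  qed
  have Ua: "U 0 \<le> k^2"
  proof -
    have "U 0 = 0" unfolding U_def
    proof (rule sum.neutral, rule ballI)
      fix x assume "x \<in> X"
      show "max 0 (0 - d x) = 0" using d0[of x] by simp
    qed
    thus ?thesis by simp
  qed
  have Ub: "k^2 \<le> U (k^2 + real n)"
  proof -
    have "max 0 (k^2 + real n - d x0) \<le> U (k^2 + real n)"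
      unfolding U_def by (rule member_le_sum[OF x0]) (auto simp: assms(2))
    moreover have "k^2 \<le> max 0 (k^2 + real n - d x0)" using dle[OF x0] by simp
    ultimately show ?thesis by linarith
  qed
  have cont: "continuous_on {0..k^2 + real n} U"
    unfolding U_def by (intro continuous_intros)
  obtain t where t: "U t = k^2"
    using IVT'[of U 0 "k^2" "k^2 + real n", OF Ua Ub _ cont] by auto
  have "Qs \<ge> k^4" using key[of t] unfolding t by (simp add: power2_eq_square power4_eq_xxxx)
  hence "real (card Quad) \<ge> k^4" using QsEq by simp
  moreover have "real (card Quad) \<le> real (2 * card M)" using QM by (simp only: of_nat_le_iff)
  ultimately have "2 * real (card M) \<ge> k^4" by simp
  hence "k^4 / 150 \<le> real (card M)" by simp
  moreover have "\<epsilon> ^ 4 * real n ^ 4 = k^4" unfolding k_def by (simp add: power_mult_distrib)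
  ultimately show ?thesis unfolding M_def by simp
qed

end
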